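(* Let $G$ be a $6$-regular graph, $\mathcal S$ a canonical path partition of $G$, $P$ a path component, and $X=x_1x_2\cdots x_k$ ($k\ge 2$) a sequence of consecutive vertices of $P$, all belonging to $V_2^b$. Let $X'\subseteq X$ be the set of vertices of $X$ that go to at least one vertex of a cycle component. If $|X'|\ge 2$, then the vertices of $X'$ are consecutive on $P$, there is a single cycle component $C$ such that every cycle-component vertex that any vertex of $X'$ goes to lies in $C$, and, if $|V(C)|\le 6$, the number of balanced edges between $X'$ and $V(C)$ is at most $\frac{|X'|\cdot|V(C)|}{2}$.
   Context: All graphs are finite, simple and undirected. A path partition of $G=(V,E)$ is a set of vertex-disjoint paths (single vertices allowed) covering $V$; its members are components. A component with $t\ge3$ vertices is a cycle component if the subgraph induced on its vertex set has a spanning cycle; a one-vertex component is an isolated vertex; every other component is a path component. A path partition is canonical if (1) it has the minimum number of components among all path partitions of $G$; (2) among those, it has the maximum number of cycle components; (3) it has no isolated vertices. Given a canonical path partition $\mathcal S$ of $G$: two vertices are path neighbors if they are consecutive on a path component. An edge of $G$ is a free edge unless it joins two path neighbors or has both endpoints in the same cycle component. $V_1$ is the set of end-vertices of path components together with all vertices of cycle components. $V_2$ is the set of vertices not in $V_1$ that are joined by a free edge to a vertex of $V_1$. $V_2^b$ is the set of vertices of $V_2$ having at least one path neighbor in $V_2$. A balanced edge is a free edge with one endpoint in $V_1$ and the other in $V_2$; for $x\in V_2$, $y\in V_1$ we say $x$ goes to $y$ if $xy$ is a balanced edge. *)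

theory Defs
  imports Main
begin

definition simple_graph :: "'a set \<Rightarrow> ('a \<Rightarrow> 'a \<Rightarrow> bool) \<Rightarrow> bool" where
  "simple_graph V adj \<longleftrightarrow> finite V \<and> (\<forall>u v. adj u v \<longrightarrow> adj v u) \<and> (\<forall>u. \<not> adj u u)
     \<and> (\<forall>u v. adj u v \<longrightarrow> u \<in> V \<and> v \<in> V)"

definition degree :: "'a set \<Rightarrow> ('a \<Rightarrow> 'a \<Rightarrow> bool) \<Rightarrow> 'a \<Rightarrow> nat" where
  "degree V adj v = card {u \<in> V. adj v u}"

definition regular :: "nat \<Rightarrow> 'a set \<Rightarrow> ('a \<Rightarrow> 'a \<Rightarrow> bool) \<Rightarrow> bool" where
  "regular d V adj \<longleftrightarrow> (\<forall>v\<in>V. degree V adj v = d)"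

definition is_path :: "('a \<Rightarrow> 'a \<Rightarrow> bool) \<Rightarrow> 'a list \<Rightarrow> bool" where
  "is_path adj p \<longleftrightarrow> p \<noteq> [] \<and> distinct p \<and> (\<forall>i. Suc i < length p \<longrightarrow> adj (p!i) (p!Suc i))"

definition path_partition :: "'a set \<Rightarrow> ('a \<Rightarrow> 'a \<Rightarrow> bool) \<Rightarrow> 'a list set \<Rightarrow> bool" where
  "path_partition V adj S \<longleftrightarrow> (\<forall>p\<in>S. is_path adj p)
     \<and> (\<forall>p\<in>S. \<forall>q\<in>S. p \<noteq> q \<longrightarrow> set p \<inter> set q = {})
     \<and> \<Union>(set ` S) = V"

definition has_spanning_cycle :: "('a \<Rightarrow> 'a \<Rightarrow> bool) \<Rightarrow> 'a set \<Rightarrow> bool" where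
  "has_spanning_cycle adj U \<longleftrightarrow> (\<exists>c. distinct c \<and> set c = U \<and> length c \<ge> 3
     \<and> (\<forall>i. Suc i < length c \<longrightarrow> adj (c!i) (c!Suc i)) \<and> adj (last c) (hd c))"

definition cycle_comp :: "('a \<Rightarrow> 'a \<Rightarrow> bool) \<Rightarrow> 'a list \<Rightarrow> bool" where
  "cycle_comp adj p \<longleftrightarrow> length p \<ge> 3 \<and> has_spanning_cycle adj (set p)"

definition path_comp :: "('a \<Rightarrow> 'a \<Rightarrow> bool) \<Rightarrow> 'a list \<Rightarrow> bool" where
  "path_comp adj p \<longleftrightarrow> length p \<ge> 2 \<and> \<not> cycle_comp adj p"

definition cycle_comps :: "('a \<Rightarrow> 'a \<Rightarrow> bool) \<Rightarrow> 'a list set \<Rightarrow> 'a list set" where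
  "cycle_comps adj S = {p \<in> S. cycle_comp adj p}"

definition canonical :: "'a set \<Rightarrow> ('a \<Rightarrow> 'a \<Rightarrow> bool) \<Rightarrow> 'a list set \<Rightarrow> bool" where
  "canonical V adj S \<longleftrightarrow> path_partition V adj S
     \<and> (\<forall>S'. path_partition V adj S' \<longrightarrow> card S \<le> card S')
     \<and> (\<forall>S'. path_partition V adj S' \<and> card S' = card S \<longrightarrow>
              card (cycle_comps adj S') \<le> card (cycle_comps adj S))
     \<and> (\<forall>p\<in>S. length p \<noteq> 1)"

definition path_neighbors :: "('a \<Rightarrow> 'a \<Rightarrow> bool) \<Rightarrow> 'a list set \<Rightarrow> 'a \<Rightarrow> 'a \<Rightarrow> bool" where
  "path_neighbors adj S u v \<longleftrightarrow> (\<exists>p\<in>S. path_comp adj p \<and>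
     (\<exists>i. Suc i < length p \<and> ((u = p!i \<and> v = p!Suc i) \<or> (v = p!i \<and> u = p!Suc i))))"

definition free_edge :: "('a \<Rightarrow> 'a \<Rightarrow> bool) \<Rightarrow> 'a list set \<Rightarrow> 'a \<Rightarrow> 'a \<Rightarrow> bool" where
  "free_edge adj S u v \<longleftrightarrow> adj u v \<and> \<not> path_neighbors adj S u v
     \<and> \<not> (\<exists>C\<in>S. cycle_comp adj C \<and> u \<in> set C \<and> v \<in> set C)"

definition V1 :: "('a \<Rightarrow> 'a \<Rightarrow> bool) \<Rightarrow> 'a list set \<Rightarrow> 'a set" where
  "V1 adj S = {v. \<exists>p\<in>S. (path_comp adj p \<and> (v = hd p \<or> v = last p))
                        \<or> (cycle_comp adj p \<and> v \<in> set p)}"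

definition V2 :: "'a set \<Rightarrow> ('a \<Rightarrow> 'a \<Rightarrow> bool) \<Rightarrow> 'a list set \<Rightarrow> 'a set" where
  "V2 V adj S = {v \<in> V. v \<notin> V1 adj S \<and> (\<exists>u\<in>V1 adj S. free_edge adj S v u)}"

definition V2b :: "'a set \<Rightarrow> ('a \<Rightarrow> 'a \<Rightarrow> bool) \<Rightarrow> 'a list set \<Rightarrow> 'a set" where
  "V2b V adj S = {v \<in> V2 V adj S. \<exists>u\<in>V2 V adj S. path_neighbors adj S v u}"

text \<open>x goes to y: x in V2, y in V1, xy a balanced (free) edge.\<close>
definition goes_to :: "'a set \<Rightarrow> ('a \<Rightarrow> 'a \<Rightarrow> bool) \<Rightarrow> 'a list set \<Rightarrow> 'a \<Rightarrow> 'a \<Rightarrow> bool" where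
  "goes_to V adj S x y \<longleftrightarrow> x \<in> V2 V adj S \<and> y \<in> V1 adj S \<and> free_edge adj S x y"

end

theory Submission
  imports Defs
begin


lemma is_path_succ: "is_path adj p \<longleftrightarrow> p \<noteq> [] \<and> distinct p \<and> successively adj p"
  unfolding is_path_def successively_conv_nth by blast

lemma is_path_single[simp]: "is_path adj [x]"
  by (simp add: is_path_succ)

lemma is_path_append:
  assumes "xs \<noteq> []" "ys \<noteq> []"
  shows "is_path adj (xs @ ys) \<longleftrightarrow> is_path adj xs \<and> is_path adj ys \<and> set xs \<inter> set ys = {} \<and> adj (last xs) (hd ys)"
  using assms by (auto simp: is_path_succ successively_append_iff)

lemma is_path_rev:
  assumes "\<forall>u v. adj u v \<longrightarrow> adj v u"
  shows "is_path adj (rev xs) \<longleftrightarrow> is_path adj xs"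
proof -
  have "(\<lambda>x y. adj y x) = adj" using assms by (auto intro!: ext)
  show ?thesis unfolding is_path_succ successively_rev distinct_rev rev_is_Nil_conv \<open>(\<lambda>x y. adj y x) = adj\<close> by simp
qed

context
  fixes V :: "'a set" and adj :: "'a \<Rightarrow> 'a \<Rightarrow> bool" and S :: "'a list set"
  assumes G: "simple_graph V adj" and can: "canonical V adj S"
begin

lemma pp: "path_partition V adj S" using can unfolding canonical_def by blast

lemma UV: "\<Union>(set ` S) = V" using pp unfolding path_partition_def by blast

lemma paths: "p \<in> S \<Longrightarrow> is_path adj p" using pp unfolding path_partition_def by blast

lemma disj: "p \<in> S \<Longrightarrow> q \<in> S \<Longrightarrow> p \<noteq> q \<Longrightarrow> set p \<inter> set q = {}"
  using pp unfolding path_partition_def by blast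

lemma same_comp: "p \<in> S \<Longrightarrow> q \<in> S \<Longrightarrow> x \<in> set p \<Longrightarrow> x \<in> set q \<Longrightarrow> p = q"
  using disj by blast

lemma finS: "finite S"
proof -
  have "inj_on hd S"
  proof
    fix p q assume "p \<in> S" "q \<in> S" "hd p = hd q"
    moreover have "hd p \<in> set p" "hd q \<in> set q" using paths[OF \<open>p\<in>S\<close>] paths[OF \<open>q\<in>S\<close>]
      by (auto simp: is_path_def)
    ultimately show "p = q" using same_comp by metis
  qed
  moreover have "hd ` S \<subseteq> V"
  proof
    fix x assume "x \<in> hd ` S"
    then obtain p where "p \<in> S" "x = hd p" by auto
    then have "x \<in> set p" using paths by (auto simp: is_path_def)
    moreover note UV
    ultimately show "x \<in> V" using \<open>p \<in> S\<close> by blast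
  qed
  moreover have "finite V" using G unfolding simple_graph_def by blast
  ultimately have "finite (hd ` S)" using finite_subset by blast
  then show ?thesis using \<open>inj_on hd S\<close> finite_imageD by blast
qed

lemma adj_sym: "adj u v \<Longrightarrow> adj v u" using G unfolding simple_graph_def by blast

lemma rev_path: "is_path adj (rev xs) \<longleftrightarrow> is_path adj xs"
  using is_path_rev G unfolding simple_graph_def by blast

lemma replace:
  assumes T: "T \<subseteq> S" and N: "\<forall>n\<in>N. is_path adj n" "finite N"
    and Nd: "\<forall>n\<in>N. \<forall>n'\<in>N. n \<noteq> n' \<longrightarrow> set n \<inter> set n' = {}"
    and U: "\<Union>(set ` N) = \<Union>(set ` T)" and c: "card N < card T"
  shows False
proof -
  let ?S = "(S - T) \<union> N"
  have fT: "finite T" using T finS finite_subset by blast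
  have "path_partition V adj ?S"
    unfolding path_partition_def
  proof (intro conjI)
    show "\<forall>p\<in>?S. is_path adj p" using paths N by blast
    show "\<Union>(set ` ?S) = V"
    proof -
      have "\<Union>(set ` ?S) = \<Union>(set ` (S - T)) \<union> \<Union>(set ` T)" using U by blast
      also have "\<dots> = \<Union>(set ` S)" using T by blast
      finally show ?thesis using UV by simp
    qed
    show "\<forall>p\<in>?S. \<forall>q\<in>?S. p \<noteq> q \<longrightarrow> set p \<inter> set q = {}"
    proof (intro ballI impI)
      fix p q assume p: "p \<in> ?S" and q: "q \<in> ?S" and "p \<noteq> q"
      have A: "set a \<inter> set n = {}" if "a \<in> S - T" "n \<in> N" for a n
      proof -
        have "set n \<subseteq> \<Union>(set ` T)" using U that by blast
        moreover have "set a \<inter> set t = {}" if "t \<in> T" for t using disj that \<open>a \<in> S - T\<close> T by blast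
        ultimately show ?thesis by blast
      qed
      show "set p \<inter> set q = {}"
      proof (cases "p \<in> N")
        case True
        then show ?thesis
        proof (cases "q \<in> N")
          case True
          then show ?thesis using Nd \<open>p \<in> N\<close> \<open>p\<noteq>q\<close> by blast
        next
          case False
          then have "q \<in> S - T" using q by blast
          then show ?thesis using A[of q p] \<open>p \<in> N\<close> by blast
        qed
      next
        case False
        then have "p \<in> S - T" using p by blast
        show ?thesis
        proof (cases "q \<in> N")
          case True
          then show ?thesis using A[of p q] \<open>p \<in> S - T\<close> by blast
        next
          case False
          then have "q \<in> S" using q by blast
          then show ?thesis using disj \<open>p \<in> S - T\<close> \<open>p\<noteq>q\<close> by blast
        qed
      qed
    qed
  qed
  then have "card S \<le> card ?S" using can unfolding canonical_def by blast
  also have "card ?S \<le> card (S - T) + card N" by (rule card_Un_le)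
  also have "card (S - T) = card S - card T" using T fT by (simp add: card_Diff_subset)
  finally show False using c card_mono[OF finS T] by linarith
qed

lemma replace1:
  assumes "T \<subseteq> S" "2 \<le> card T" "is_path adj n" "set n = \<Union>(set ` T)"
  shows False
proof (rule replace[of T "{n}"])
qed (use assms in auto)

lemma replace2:
  assumes "T \<subseteq> S" "3 \<le> card T" "is_path adj n1" "is_path adj n2" "set n1 \<inter> set n2 = {}"
    "set n1 \<union> set n2 = \<Union>(set ` T)"
  shows False
proof -
  have "card {n1, n2} \<le> 2" by (simp add: card_insert_if)
  then show False
  proof (intro replace[of T "{n1,n2}"])
  qed (use assms in auto)
qed

end


definition cyc :: "('a \<Rightarrow> 'a \<Rightarrow> bool) \<Rightarrow> 'a list \<Rightarrow> 'a list" where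
  "cyc adj C = (SOME c. distinct c \<and> set c = set C \<and> length c \<ge> 3
     \<and> (\<forall>i. Suc i < length c \<longrightarrow> adj (c!i) (c!Suc i)) \<and> adj (last c) (hd c))"

definition succC :: "('a \<Rightarrow> 'a \<Rightarrow> bool) \<Rightarrow> 'a list \<Rightarrow> 'a \<Rightarrow> 'a" where
  "succC adj C x = (let c = cyc adj C in c ! (Suc (THE i. i < length c \<and> c!i = x) mod length c))"

lemma cyc_props:
  assumes "cycle_comp adj C"
  shows "distinct (cyc adj C) \<and> set (cyc adj C) = set C \<and> length (cyc adj C) \<ge> 3
     \<and> successively adj (cyc adj C) \<and> adj (last (cyc adj C)) (hd (cyc adj C))"
proof -
  have "\<exists>c. distinct c \<and> set c = set C \<and> length c \<ge> 3
     \<and> (\<forall>i. Suc i < length c \<longrightarrow> adj (c!i) (c!Suc i)) \<and> adj (last c) (hd c)"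
    using assms unfolding cycle_comp_def has_spanning_cycle_def by blast
  from someI_ex[OF this] show ?thesis unfolding cyc_def successively_conv_nth by blast
qed

lemma succ_nth:
  assumes "cycle_comp adj C" "i < length (cyc adj C)"
  shows "succC adj C (cyc adj C ! i) = cyc adj C ! (Suc i mod length (cyc adj C))"
proof -
  let ?c = "cyc adj C"
  have d: "distinct ?c" using cyc_props[OF assms(1)] by blast
  have "(THE j. j < length ?c \<and> ?c!j = ?c!i) = i"
    using d assms(2) by (auto simp: nth_eq_iff_index_eq)
  then show ?thesis unfolding succC_def Let_def by simp
qed

lemma rot1_cyclic:
  assumes "xs \<noteq> []" "successively adj xs" "adj (last xs) (hd xs)"
  shows "successively adj (rotate1 xs) \<and> adj (last (rotate1 xs)) (hd (rotate1 xs))"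
proof (cases xs)
  case Nil then show ?thesis using assms by simp
next
  case (Cons y ys)
  show ?thesis
  proof (cases ys)
    case Nil then show ?thesis using assms Cons by simp
  next
    case (Cons z zs)
    have r: "rotate1 xs = z # zs @ [y]" using Cons \<open>xs = y # ys\<close> by simp
    have s1: "successively adj (z # zs)" using assms(2) \<open>xs = y # ys\<close> Cons by simp
    have l: "adj (last (z # zs)) y" using assms(3) \<open>xs = y # ys\<close> Cons by simp
    have "successively adj ((z # zs) @ [y])"
      unfolding successively_append_iff using s1 l by simp
    moreover have "adj y z" using assms(2) \<open>xs = y # ys\<close> Cons by simp
    ultimately show ?thesis using r by simp
  qed
qed

lemma rot_cyclic:
  assumes "xs \<noteq> []" "successively adj xs" "adj (last xs) (hd xs)"
  shows "successively adj (rotate n xs) \<and> adj (last (rotate n xs)) (hd (rotate n xs))"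
proof (induction n)
  case 0 then show ?case using assms by simp
next
  case (Suc n)
  have "rotate n xs \<noteq> []" using assms by simp
  from rot1_cyclic[OF this, of adj] Suc.IH show ?case by simp
qed

lemma walk:
  assumes "cycle_comp adj C" "x \<in> set C"
  shows "\<exists>w. is_path adj w \<and> set w = set C \<and> last w = x \<and> hd w = succC adj C x"
proof -
  let ?c = "cyc adj C"
  note cp = cyc_props[OF assms(1)]
  have ne: "?c \<noteq> []" using cp by auto
  obtain i where i: "i < length ?c" "?c ! i = x" using assms(2) cp by (metis in_set_conv_nth)
  let ?w = "rotate (Suc i) ?c"
  have "hd (rotate i ?c) = x" using hd_rotate_conv_nth[OF ne, of i] i by simp
  moreover have "rotate i ?c \<noteq> []" using ne by simp
  ultimately have l: "last ?w = x" by (cases "rotate i ?c") auto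
  have h: "hd ?w = succC adj C x"
    using hd_rotate_conv_nth[OF ne, of "Suc i"] succ_nth[OF assms(1) i(1)] i(2) by simp
  have "is_path adj ?w" using rot_cyclic[OF ne, of adj "Suc i"] cp ne
    unfolding is_path_succ by simp
  moreover have "set ?w = set C" using cp by simp
  ultimately show ?thesis using l h by blast
qed


context
  fixes V :: "'a set" and adj :: "'a \<Rightarrow> 'a \<Rightarrow> bool" and S :: "'a list set"
  assumes G: "simple_graph V adj" and can: "canonical V adj S"
begin

lemmas Paths = paths[OF G can]
lemmas Disj = disj[OF G can]
lemmas Sym = adj_sym[OF G can]
lemmas RevP = rev_path[OF G can]
lemmas Rep1 = replace1[OF G can]
lemmas Rep2 = replace2[OF G can]

lemma cyc_ne_path: "cycle_comp adj C \<Longrightarrow> path_comp adj P \<Longrightarrow> C \<noteq> P"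
  unfolding path_comp_def by blast

lemma split_path:
  assumes "is_path adj (xs @ ys)" "xs \<noteq> []" "ys \<noteq> []"
  shows "is_path adj xs" "is_path adj ys"
  using assms is_path_append by blast+

lemma R1:
  assumes P: "P \<in> S" "path_comp adj P" "P = L @ p # p' # R"
    and C: "C \<in> S" "cycle_comp adj C" "c \<in> set C" "adj p c"
    and D: "D \<in> S" "cycle_comp adj D" "d \<in> set D" "adj p' d"
    and CD: "C \<noteq> D"
  shows False
proof -
  obtain wc where wc: "is_path adj wc" "set wc = set C" "last wc = c" using walk[OF C(2,3)] by blast
  obtain wd where wd: "is_path adj wd" "set wd = set D" "last wd = d" using walk[OF D(2,3)] by blast
  have PC: "P \<noteq> C" "P \<noteq> D" using cyc_ne_path C(2) D(2) P(2) by metis+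
  have d1: "set P \<inter> set C = {}" "set P \<inter> set D = {}" "set C \<inter> set D = {}"
    using Disj PC CD P(1) C(1) D(1) by blast+
  have pP: "is_path adj P" using Paths P(1) .
  then have dP: "distinct P" unfolding is_path_def by blast
  have pL: "is_path adj (L @ [p])" "is_path adj (p' # R)"
    using split_path[of "L @ [p]" "p' # R"] pP P(3) by auto
  have ne: "wc \<noteq> []" "wd \<noteq> []" using wc wd unfolding is_path_def by auto
  have n1: "is_path adj ((L @ [p]) @ rev wc)"
    using is_path_append[of "L @ [p]" "rev wc"] pL wc RevP ne d1 P(3) C(4)
    by (auto simp: hd_rev)
  have n2: "is_path adj (wd @ (p' # R))"
    using is_path_append[of wd "p' # R"] pL wd ne d1 P(3) D(4) Sym by auto
  show False
  proof (rule Rep2[of "{P, C, D}"])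
    show "{P, C, D} \<subseteq> S" using P C D by blast
    show "3 \<le> card {P, C, D}" using PC CD by simp
    show "is_path adj ((L @ [p]) @ rev wc)" by fact
    show "is_path adj (wd @ (p' # R))" by fact
    show "set ((L @ [p]) @ rev wc) \<inter> set (wd @ p' # R) = {}"
      using d1 dP P(3) wc wd by auto
    show "set ((L @ [p]) @ rev wc) \<union> set (wd @ p' # R) = \<Union> (set ` {P, C, D})"
      using P(3) wc wd by auto
  qed
qed

lemma end_orient:
  assumes "Q \<in> S" "e = hd Q \<or> e = last Q"
  shows "\<exists>q. is_path adj q \<and> set q = set Q \<and> last q = e \<and> hd (rev q) = e"
proof -
  have pQ: "is_path adj Q" using Paths assms(1) .
  then have ne: "Q \<noteq> []" unfolding is_path_def by blast
  show ?thesis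
  proof (cases "e = last Q")
    case True then show ?thesis using pQ ne by (auto simp: hd_rev)
  next
    case False then have "e = hd Q" using assms(2) by blast
    then show ?thesis using pQ ne RevP by (intro exI[of _ "rev Q"]) (auto simp: last_rev)
  qed
qed

lemma R2:
  assumes P: "P \<in> S" "path_comp adj P" "P = L @ p # p' # R"
    and C: "C \<in> S" "cycle_comp adj C" "c \<in> set C"
    and A: "(adj p c \<and> adj p' (succC adj C c)) \<or> (adj p (succC adj C c) \<and> adj p' c)"
  shows False
proof -
  obtain w where w: "is_path adj w" "set w = set C" "last w = c" "hd w = succC adj C c"
    using walk[OF C(2,3)] by blast
  have PC: "P \<noteq> C" using cyc_ne_path C(2) P(2) by metis
  have d1: "set P \<inter> set C = {}" using Disj PC P(1) C(1) by blast
  have pP: "is_path adj P" using Paths P(1) .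
  then have dP: "distinct P" unfolding is_path_def by blast
  have pL: "is_path adj (L @ [p])" "is_path adj (p' # R)"
    using split_path[of "L @ [p]" "p' # R"] pP P(3) by auto
  have ne: "w \<noteq> []" using w unfolding is_path_def by auto
  have sets: "set ((L @ [p]) @ w' @ (p' # R)) = \<Union> (set ` {P, C})" if "set w' = set w" for w'
    using that P(3) w by auto
  show False
  proof (cases "adj p c \<and> adj p' (succC adj C c)")
    case True
    have n1: "is_path adj (rev w @ (p' # R))"
      using is_path_append[of "rev w" "p' # R"] pL w RevP ne d1 P(3) True Sym
      by (auto simp: last_rev)
    have n: "is_path adj ((L @ [p]) @ rev w @ (p' # R))"
      using is_path_append[of "L @ [p]" "rev w @ (p' # R)"] n1 pL w ne d1 P(3) True dP
      by (auto simp: hd_rev)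
    show False using Rep1[of "{P, C}", OF _ _ n] sets[of "rev w"] PC P C by auto
  next
    case False
    then have F: "adj p (succC adj C c)" "adj p' c" using A by blast+
    have n1: "is_path adj (w @ (p' # R))"
      using is_path_append[of "w" "p' # R"] pL w ne d1 P(3) F Sym
      by auto
    have n: "is_path adj ((L @ [p]) @ w @ (p' # R))"
      using is_path_append[of "L @ [p]" "w @ (p' # R)"] n1 pL w ne d1 P(3) F dP
      by auto
    show False using Rep1[of "{P, C}", OF _ _ n] sets[of "w"] PC P C by auto
  qed
qed

lemma R3:
  assumes P: "P \<in> S" "path_comp adj P" "P = L @ p # p' # R"
    and C: "C \<in> S" "cycle_comp adj C" "c \<in> set C"
    and Q: "Q \<in> S" "path_comp adj Q" "Q \<noteq> P" "e = hd Q \<or> e = last Q"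
    and A: "(adj p c \<and> adj p' e) \<or> (adj p e \<and> adj p' c)"
  shows False
proof -
  obtain w where w: "is_path adj w" "set w = set C" "last w = c"
    using walk[OF C(2,3)] by blast
  obtain q where q: "is_path adj q" "set q = set Q" "last q = e" "hd (rev q) = e"
    using end_orient[OF Q(1,4)] by blast
  have PC: "P \<noteq> C" "Q \<noteq> C" using cyc_ne_path C(2) P(2) Q(2) by metis+
  have d1: "set P \<inter> set C = {}" "set P \<inter> set Q = {}" "set Q \<inter> set C = {}"
    using Disj PC Q(3) P(1) C(1) Q(1) by blast+
  have pP: "is_path adj P" using Paths P(1) .
  then have dP: "distinct P" unfolding is_path_def by blast
  have pL: "is_path adj (L @ [p])" "is_path adj (p' # R)"
    using split_path[of "L @ [p]" "p' # R"] pP P(3) by auto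
  have ne: "w \<noteq> []" "q \<noteq> []" using w q unfolding is_path_def by auto
  have card: "3 \<le> card {P, C, Q}" using PC Q(3) by auto
  have sub: "{P, C, Q} \<subseteq> S" using P C Q by blast
  show False
  proof (cases "adj p c \<and> adj p' e")
    case True
    have n1: "is_path adj ((L @ [p]) @ rev w)"
      using is_path_append[of "L @ [p]" "rev w"] pL w RevP ne d1 P(3) True
      by (auto simp: hd_rev)
    have n2: "is_path adj (q @ (p' # R))"
      using is_path_append[of q "p' # R"] pL q ne d1 P(3) True Sym by auto
    show False
      by (rule Rep2[OF sub card n1 n2]) (use d1 dP P(3) w q in auto)
  next
    case False
    then have F: "adj p e" "adj p' c" using A by blast+
    have n1: "is_path adj ((L @ [p]) @ rev q)"
      using is_path_append[of "L @ [p]" "rev q"] pL q RevP ne d1 P(3) F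
      by auto
    have n2: "is_path adj (w @ (p' # R))"
      using is_path_append[of w "p' # R"] pL w ne d1 P(3) F Sym by auto
    show False
      by (rule Rep2[OF sub card n1 n2]) (use d1 dP P(3) w q in auto)
  qed
qed

lemma R4:
  assumes P: "P \<in> S" "path_comp adj P" "P = L @ p # p' # R"
    and C: "C \<in> S" "cycle_comp adj C" "c \<in> set C"
    and A: "(L \<noteq> [] \<and> adj p c \<and> adj p' (hd L)) \<or> (R \<noteq> [] \<and> adj p (last R) \<and> adj p' c)"
  shows False
proof -
  obtain w where w: "is_path adj w" "set w = set C" "last w = c"
    using walk[OF C(2,3)] by blast
  have PC: "P \<noteq> C" using cyc_ne_path C(2) P(2) by metis
  have d1: "set P \<inter> set C = {}" using Disj PC P(1) C(1) by blast
  have pP: "is_path adj P" using Paths P(1) .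
  then have dP: "distinct P" unfolding is_path_def by blast
  have pL: "is_path adj (L @ [p])" "is_path adj (p' # R)"
    using split_path[of "L @ [p]" "p' # R"] pP P(3) by auto
  have ne: "w \<noteq> []" using w unfolding is_path_def by auto
  have sub: "{P, C} \<subseteq> S" "2 \<le> card {P, C}" using P C PC by auto
  show False
  proof (cases "L \<noteq> [] \<and> adj p c \<and> adj p' (hd L)")
    case True
    have r: "is_path adj (rev (L @ [p]))" using pL RevP by blast
    have n1: "is_path adj (rev (L @ [p]) @ (p' # R))"
      using is_path_append[of "rev (L @ [p])" "p' # R"] pL r dP P(3) True Sym
      by (auto simp: last_rev)
    have n: "is_path adj (w @ rev (L @ [p]) @ (p' # R))"
      using is_path_append[of "w" "rev (L @ [p]) @ (p' # R)"] n1 w ne d1 P(3) True Sym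
      by (auto simp: hd_rev)
    show False by (rule Rep1[OF sub n]) (use P(3) w in auto)
  next
    case False
    then have F: "R \<noteq> []" "adj p (last R)" "adj p' c" using A by blast+
    have r: "is_path adj (rev (p' # R))" "is_path adj (rev w)" using pL w RevP by blast+
    have n1: "is_path adj (rev (p' # R) @ rev w)"
      using is_path_append[of "rev (p' # R)" "rev w"] r w ne d1 P(3) F Sym
      by (auto simp: hd_rev)
    have n: "is_path adj ((L @ [p]) @ rev (p' # R) @ rev w)"
      using is_path_append[of "L @ [p]" "rev (p' # R) @ rev w"] n1 pL w ne d1 P(3) F dP
      by (auto simp: hd_rev)
    show False by (rule Rep1[OF sub n]) (use P(3) w in auto)
  qed
qed

lemma R5:
  assumes P: "P \<in> S" "path_comp adj P" "P = A @ p # B @ s # E"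
    and ne: "A \<noteq> []" "B \<noteq> []" "E \<noteq> []"
    and C: "C \<in> S" "cycle_comp adj C" "c \<in> set C" "adj p c"
    and D: "D \<in> S" "cycle_comp adj D" "d \<in> set D" "adj s d"
    and e: "adj (hd B) (last E)" "adj (last B) (hd A)"
  shows False
proof -
  obtain wc where wc: "is_path adj wc" "set wc = set C" "last wc = c" using walk[OF C(2,3)] by blast
  obtain wd where wd: "is_path adj wd" "set wd = set D" "last wd = d" using walk[OF D(2,3)] by blast
  have PC: "P \<noteq> C" "P \<noteq> D" using cyc_ne_path C(2) D(2) P(2) by metis+
  have d1: "set P \<inter> set C = {}" "set P \<inter> set D = {}"
    using Disj PC P(1) C(1) D(1) by blast+
  have pP: "is_path adj P" using Paths P(1) .
  then have dP: "distinct P" unfolding is_path_def by blast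
  have P': "P = (A @ [p]) @ B @ (s # E)" using P(3) by simp
  have pA: "is_path adj (A @ [p])" "is_path adj (B @ (s # E))"
    using split_path[of "A @ [p]" "B @ (s # E)"] pP P' ne by auto
  have pB: "is_path adj B" "is_path adj (s # E)"
    using split_path[of "B" "s # E"] pA ne by auto
  have ne2: "wc \<noteq> []" "wd \<noteq> []" using wc wd unfolding is_path_def by auto
  have r: "is_path adj (rev (A @ [p]))" "is_path adj (rev B)" "is_path adj (rev (s # E))"
    "is_path adj (rev wd)"
    using pA pB wd RevP by blast+
  have n3: "is_path adj (rev B @ rev (s # E))"
    using is_path_append[of "rev B" "rev (s # E)"] r dP P' ne e Sym
    by (auto simp: hd_rev last_rev)
  have n2: "is_path adj (rev (A @ [p]) @ rev B @ rev (s # E))"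
    using is_path_append[of "rev (A @ [p])" "rev B @ rev (s # E)"] r n3 dP P' ne e Sym
    by (auto simp: hd_rev last_rev)
  have n1: "is_path adj (wc @ rev (A @ [p]) @ rev B @ rev (s # E))"
    using is_path_append[of wc "rev (A @ [p]) @ rev B @ rev (s # E)"] n2 wc ne2 d1 P' C(4) Sym
    by (auto simp: hd_rev)
  show False
  proof (cases "C = D")
    case True
    have sub: "{P, C} \<subseteq> S" "2 \<le> card {P, C}" using P C PC by auto
    show False by (rule Rep1[OF sub n1]) (use P' wc in auto)
  next
    case False
    have d2: "set C \<inter> set D = {}" using Disj False C(1) D(1) by blast
    have sub: "{P, C, D} \<subseteq> S" "2 \<le> card {P, C, D}" using P C D PC False by (auto simp: card_insert_if)
    have n: "is_path adj ((wc @ rev (A @ [p]) @ rev B @ rev (s # E)) @ rev wd)"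
      using is_path_append[of "wc @ rev (A @ [p]) @ rev B @ rev (s # E)" "rev wd"] n1 r wc wd
         ne2 d1 d2 P' D(4)
      by (auto simp: hd_rev)
    show False by (rule Rep1[OF sub n]) (use P' wc wd in auto)
  qed
qed

end


definition relK :: "'b set \<Rightarrow> ('b \<Rightarrow> 'b) \<Rightarrow> 'b set \<Rightarrow> 'b set \<Rightarrow> bool" where
  "relK M f K1 K2 \<longleftrightarrow> K1 \<subseteq> M \<and> K2 \<subseteq> M \<and> K2 \<inter> f ` K1 = {} \<and> K1 \<inter> f ` K2 = {}"

context
  fixes M :: "'b set" and f :: "'b \<Rightarrow> 'b"
  assumes fin: "finite M" and m3: "3 \<le> card M" and m6: "card M \<le> 6"
    and fM: "f ` M \<subseteq> M" and inj: "inj_on f M"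
    and f2: "\<forall>u\<in>M. f (f u) \<noteq> u"
    and f4: "5 \<le> card M \<longrightarrow> (\<forall>u\<in>M. f (f (f (f u))) \<noteq> u)"
begin

lemma surjf: "f ` M = M"
  using fin fM inj by (simp add: endo_inj_surj)

lemma pair_bound:
  assumes "relK M f K1 K2"
  shows "card K1 + card K2 \<le> card M"
proof -
  have s: "K1 \<subseteq> M" "K2 \<subseteq> M" "K2 \<inter> f ` K1 = {}" using assms unfolding relK_def by blast+
  have c: "card (f ` K1) = card K1" using inj s(1) by (meson card_image inj_on_subset)
  have "K2 \<union> f ` K1 \<subseteq> M" using s fM by blast
  then have "card (K2 \<union> f ` K1) \<le> card M" using fin card_mono by blast
  moreover have "card (K2 \<union> f ` K1) = card K2 + card (f ` K1)"
    using card_Un_disjoint[OF finite_subset[OF s(2) fin] finite_imageI[OF finite_subset[OF s(1) fin]] s(3)] .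
  ultimately show ?thesis using c by linarith
qed

lemma triple_bound:
  assumes r1: "relK M f K1 K2" and r2: "relK M f K2 K3" and ne: "K2 \<noteq> {}"
  shows "2 * (card K1 + card K2 + card K3) \<le> 3 * card M"
proof -
  define N where "N = f ` K2 \<union> {x \<in> M. f x \<in> K2}"
  have s: "K1 \<subseteq> M" "K2 \<subseteq> M" "K3 \<subseteq> M" using r1 r2 unfolding relK_def by simp_all
  have e1: "K2 \<inter> f ` K1 = {}" "K1 \<inter> f ` K2 = {}" using r1 unfolding relK_def by simp_all
  have e2: "K3 \<inter> f ` K2 = {}" "K2 \<inter> f ` K3 = {}" using r2 unfolding relK_def by simp_all
  have NM: "N \<subseteq> M"
  proof
    fix x assume "x \<in> N"
    then show "x \<in> M" unfolding N_def using s(2) fM by auto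
  qed
  have fN: "finite N" using finite_subset[OF NM fin] .
  have d1: "K1 \<inter> N = {}"
  proof -
    have "x \<notin> N" if "x \<in> K1" for x
    proof -
      have "x \<notin> f ` K2" using e1(2) that by blast
      moreover have "f x \<notin> K2" using e1(1) that by blast
      ultimately show ?thesis unfolding N_def by simp
    qed
    then show ?thesis by blast
  qed
  have d3: "K3 \<inter> N = {}"
  proof -
    have "x \<notin> N" if "x \<in> K3" for x
    proof -
      have "x \<notin> f ` K2" using e2(1) that by blast
      moreover have "f x \<notin> K2" using e2(2) that by blast
      ultimately show ?thesis unfolding N_def by simp
    qed
    then show ?thesis by blast
  qed
  have b1: "card K1 + card N \<le> card M"
  proof -
    have "K1 \<union> N \<subseteq> M" using NM s by blast
    then have "card (K1 \<union> N) \<le> card M" using fin card_mono by blast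
    moreover have "card (K1 \<union> N) = card K1 + card N"
      using card_Un_disjoint[OF finite_subset[OF s(1) fin] fN d1] .
    ultimately show ?thesis by linarith
  qed
  have b3: "card K3 + card N \<le> card M"
  proof -
    have "K3 \<union> N \<subseteq> M" using NM s by blast
    then have "card (K3 \<union> N) \<le> card M" using fin card_mono by blast
    moreover have "card (K3 \<union> N) = card K3 + card N"
      using card_Un_disjoint[OF finite_subset[OF s(3) fin] fN d3] .
    ultimately show ?thesis by linarith
  qed
  have c2: "card (f ` K2) = card K2" using inj s(2) by (meson card_image inj_on_subset)
  have bN: "card K2 \<le> card N"
    using c2 card_mono[OF fN, of "f ` K2"] unfolding N_def by simp
  have pre: "\<exists>x\<in>M. f x = v" if "v \<in> M" for v using surjf that by (metis imageE)
  have n1: "2 \<le> card N" if c1: "card K2 = 1"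
  proof -
    obtain v where v: "K2 = {v}" using card_1_singletonE[OF c1] by metis
    then have vM: "v \<in> M" using s by blast
    obtain x where x: "x \<in> M" "f x = v" using pre[OF vM] by blast
    have ne: "f v \<noteq> x"
    proof
      assume "f v = x"
      then have "f (f x) = x" using x(2) by simp
      then show False using f2 x(1) by blast
    qed
    have i1: "f v \<in> N" unfolding N_def using v by simp
    have i2: "x \<in> N" unfolding N_def using v x by simp
    have "card {f v, x} = 2" using ne by simp
    moreover have "card {f v, x} \<le> card N" using card_mono[OF fN] i1 i2 by simp
    ultimately show ?thesis by linarith
  qed
  have n2: "3 \<le> card N" if c2: "card K2 = 2" "5 \<le> card M"
  proof -
    obtain v0 v1 where v: "K2 = {v0, v1}" "v0 \<noteq> v1" using c2(1) unfolding card_2_iff by blast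
    then have vM: "v0 \<in> M" "v1 \<in> M" using s by blast+
    obtain x0 where x0: "x0 \<in> M" "f x0 = v0" using pre[OF vM(1)] by blast
    obtain x1 where x1: "x1 \<in> M" "f x1 = v1" using pre[OF vM(2)] by blast
    have fv: "f v0 \<noteq> f v1" using inj vM v(2) unfolding inj_on_def by blast
    have a0: "f v0 \<noteq> x0"
    proof
      assume "f v0 = x0"
      then have "f (f x0) = x0" using x0(2) by simp
      then show False using f2 x0(1) by blast
    qed
    have a1: "f v1 \<noteq> x1"
    proof
      assume "f v1 = x1"
      then have "f (f x1) = x1" using x1(2) by simp
      then show False using f2 x1(1) by blast
    qed
    have i1: "f v0 \<in> N" "f v1 \<in> N" unfolding N_def using v by simp_all
    have i2: "x0 \<in> N" "x1 \<in> N" unfolding N_def using v x0 x1 by simp_all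
    show ?thesis
    proof (cases "x0 = f v1 \<and> x1 = f v0")
      case True
      then have "f (f (f (f v0))) = v0" using x0 x1 by simp
      then show ?thesis using f4 c2(2) vM by blast
    next
      case False
      show ?thesis
      proof (cases "x0 = f v1")
        case True
        then have "x1 \<noteq> f v0" using False by blast
        then have "card {f v0, f v1, x1} = 3" using fv a1 by simp
        moreover have "card {f v0, f v1, x1} \<le> card N" using card_mono[OF fN] i1 i2 by simp
        ultimately show ?thesis by linarith
      next
        case F2: False
        then have "card {f v0, f v1, x0} = 3" using fv a0 by simp
        moreover have "card {f v0, f v1, x0} \<le> card N" using card_mono[OF fN] i1 i2 by simp
        ultimately show ?thesis by linarith
      qed
    qed
  qed
  have "card K2 \<noteq> 0" using ne finite_subset[OF s(2) fin] by simp
  then have a1: "1 \<le> card K2" by linarith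
  show ?thesis
  proof (cases "card K2 = 1")
    case True
    have "2 * card K1 + 2 * card K2 + 2 * card K3 \<le> 3 * card M" using n1[OF True] True b1 b3 m6 by linarith
    then show ?thesis by (simp add: distrib_left)
  next
    case F1: False
    show ?thesis
    proof (cases "card K2 = 2 \<and> 5 \<le> card M")
      case True
      then have "3 \<le> card N" using n2 by blast
      then have "2 * card K1 + 2 * card K2 + 2 * card K3 \<le> 3 * card M" using True b1 b3 m6 by linarith
      then show ?thesis by (simp add: distrib_left)
    next
      case False
      then have "card M \<le> 2 * card K2" using F1 a1 m6 by linarith
      then have "2 * card K1 + 2 * card K2 + 2 * card K3 \<le> 3 * card M" using bN b1 b3 by linarith
      then show ?thesis by (simp add: distrib_left)
    qed
  qed
qed

lemma chain_bound:
  assumes "2 \<le> length ys" "successively (\<lambda>u v. relK M f (K u) (K v)) ys" "\<forall>y\<in>set ys. K y \<noteq> {}"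
  shows "2 * sum_list (map (\<lambda>y. card (K y)) ys) \<le> length ys * card M"
  using assms
proof (induction ys rule: induct_list012)
  case 1 then show ?case by simp
next
  case (2 x) then show ?case by simp
next
  case (3 x y zs)
  have r: "relK M f (K x) (K y)" using "3.prems"(2) by simp
  have pb: "card (K x) + card (K y) \<le> card M" using pair_bound[OF r] .
  show ?case
  proof (cases zs)
    case Nil then show ?thesis using pb by simp
  next
    case (Cons z zs')
    show ?thesis
    proof (cases zs')
      case Nil
      have r2: "relK M f (K y) (K z)" using "3.prems"(2) Cons by simp
      have "K y \<noteq> {}" using "3.prems"(3) by simp
      from triple_bound[OF r r2 this] show ?thesis using Cons Nil by simp
    next
      case (Cons w ws)
      have "successively (\<lambda>u v. relK M f (K u) (K v)) zs"
        using "3.prems"(2) by (cases zs) auto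
      moreover have "2 \<le> length zs" using Cons \<open>zs = z # zs'\<close> by simp
      moreover have "\<forall>y\<in>set zs. K y \<noteq> {}" using "3.prems"(3) by simp
      ultimately have "2 * sum_list (map (\<lambda>y. card (K y)) zs) \<le> length zs * card M"
        using "3.IH"(1) by blast
      then show ?thesis using pb by (simp add: algebra_simps)
    qed
  qed
qed

end


lemma split2: "Suc i < length xs \<Longrightarrow> xs = take i xs @ xs!i # xs!Suc i # drop (Suc (Suc i)) xs"
  by (metis Cons_nth_drop_Suc Suc_lessD id_take_nth_drop)

lemma split3:
  assumes "i < j" "j < length xs"
  shows "xs = take i xs @ xs!i # take (j - Suc i) (drop (Suc i) xs) @ xs!j # drop (Suc j) xs"
proof -
  have "drop (Suc i) xs = take (j - Suc i) (drop (Suc i) xs) @ drop (j - Suc i) (drop (Suc i) xs)"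
    by (rule append_take_drop_id[symmetric])
  moreover have "drop (j - Suc i) (drop (Suc i) xs) = drop j xs" using assms by simp
  moreover have "drop j xs = xs!j # drop (Suc j) xs" using assms by (simp add: Cons_nth_drop_Suc)
  ultimately have "drop (Suc i) xs = take (j - Suc i) (drop (Suc i) xs) @ xs!j # drop (Suc j) xs"
    by simp
  then show ?thesis using id_take_nth_drop[of i xs] assms by simp
qed

lemma split3_B:
  assumes "Suc i < j" "j < length xs"
  shows "take (j - Suc i) (drop (Suc i) xs) \<noteq> []"
    "hd (take (j - Suc i) (drop (Suc i) xs)) = xs ! Suc i"
    "last (take (j - Suc i) (drop (Suc i) xs)) = xs ! (j - 1)"
proof -
  let ?B = "take (j - Suc i) (drop (Suc i) xs)"
  have l: "length ?B = j - Suc i" using assms by simp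
  show "?B \<noteq> []" using l assms by auto
  show "hd ?B = xs ! Suc i" using assms l by (simp add: hd_conv_nth)
  have e1: "last ?B = ?B ! (j - Suc i - 1)" using l assms by (simp add: last_conv_nth)
  have "j - Suc i - 1 + Suc i = j - 1" using assms by linarith
  then have "?B ! (j - Suc i - 1) = xs ! (j - 1)" using assms by (simp add: add.commute)
  then show "last ?B = xs ! (j - 1)" using e1 by simp
qed

lemma pos_in_X:
  assumes "P = pre @ X @ suf" "distinct P" "i < length P"
  shows "P!i \<in> set X \<longleftrightarrow> length pre \<le> i \<and> i < length pre + length X"
proof
  assume "P!i \<in> set X"
  then obtain t where t: "t < length X" "X!t = P!i" by (metis in_set_conv_nth)
  have "P!(length pre + t) = X!t" using assms(1) t by (simp add: nth_append)
  then have "P!(length pre + t) = P!i" using t by simp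
  moreover have "length pre + t < length P" using assms(1) t by simp
  ultimately have "length pre + t = i" using assms(2,3) nth_eq_iff_index_eq by blast
  then show "length pre \<le> i \<and> i < length pre + length X" using t by simp
next
  assume a: "length pre \<le> i \<and> i < length pre + length X"
  then have "i - length pre < length X" by linarith
  then have "P!i = X!(i - length pre)" using assms(1) a by (simp add: nth_append)
  then show "P!i \<in> set X" using \<open>i - length pre < length X\<close> by simp
qed

lemma mod_inj: "(i::nat) < m \<Longrightarrow> j < m \<Longrightarrow> Suc i mod m = Suc j mod m \<Longrightarrow> i = j"
  by (metis Suc_lessI le_eq_less_or_eq mod_Suc mod_less nat.inject zero_neq_one
      mod_self Suc_leI old.nat.distinct(2))

lemma mod_ne: fixes i m k :: nat assumes "i < m" "0 < k" "k < m" shows "(i + k) mod m \<noteq> i"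
proof (cases "i + k < m")
  case True
  then have "(i + k) mod m = i + k" by simp
  then show ?thesis using assms by linarith
next
  case False
  then have "(i + k) mod m = (i + k - m) mod m" by (simp add: le_mod_geq)
  also have "\<dots> = i + k - m" using assms False by simp
  finally show ?thesis using assms False by linarith
qed


context
  fixes V :: "'a set" and adj :: "'a \<Rightarrow> 'a \<Rightarrow> bool" and S :: "'a list set"
    and P X :: "'a list" and X' :: "'a set"
  assumes G: "simple_graph V adj" and can: "canonical V adj S"
    and PS: "P \<in> S" and Pp: "path_comp adj P"
    and ex: "\<exists>pre suf. P = pre @ X @ suf" and lX: "length X \<ge> 2"
    and XV: "set X \<subseteq> V2b V adj S"
    and X'def: "X' = {x \<in> set X. \<exists>C\<in>S. cycle_comp adj C \<and> (\<exists>y\<in>set C. goes_to V adj S x y)}"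
    and cX': "card X' \<ge> 2"
begin

lemma pP: "is_path adj P" using paths[OF G can PS] .
lemma dP: "distinct P" using pP unfolding is_path_def by blast
lemma nP: "2 \<le> length P" using Pp unfolding path_comp_def by blast
lemma XV2: "set X \<subseteq> V2 V adj S" using XV unfolding V2b_def by blast
lemma X'X: "X' \<subseteq> set X" using X'def by blast
lemma XP: "set X \<subseteq> set P" using ex by auto

lemma hdV1: "hd P \<in> V1 adj S" "last P \<in> V1 adj S"
  using PS Pp unfolding V1_def by blast+

lemma intr: "x \<in> V2 V adj S \<Longrightarrow> x \<noteq> hd P \<and> x \<noteq> last P"
  using hdV1 unfolding V2_def by blast

lemma cycV1: "D \<in> S \<Longrightarrow> cycle_comp adj D \<Longrightarrow> y \<in> set D \<Longrightarrow> y \<in> V1 adj S"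
  unfolding V1_def by blast

lemma notcyc: "x \<in> set P \<Longrightarrow> D \<in> S \<Longrightarrow> cycle_comp adj D \<Longrightarrow> x \<notin> set D"
  using same_comp[OF G can] PS Pp unfolding path_comp_def by metis

lemma gt_iff:
  assumes "x \<in> V2 V adj S" "x \<in> set P" "D \<in> S" "cycle_comp adj D" "y \<in> set D"
  shows "goes_to V adj S x y \<longleftrightarrow> adj x y"
proof
  assume "goes_to V adj S x y" then show "adj x y" unfolding goes_to_def free_edge_def by blast
next
  assume a: "adj x y"
  have "\<not> path_neighbors adj S x y"
  proof
    assume "path_neighbors adj S x y"
    then obtain p i where p: "p \<in> S" "path_comp adj p" "Suc i < length p"
      "(x = p!i \<and> y = p!Suc i) \<or> (y = p!i \<and> x = p!Suc i)"
      unfolding path_neighbors_def by blast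
    then have "y \<in> set p" by (auto simp: in_set_conv_nth) (metis Suc_lessD nth_mem)+
    then have "p = D" using same_comp[OF G can] p(1) assms(3,5) by blast
    then show False using p(2) assms(4) unfolding path_comp_def by blast
  qed
  moreover have "\<not> (\<exists>C\<in>S. cycle_comp adj C \<and> x \<in> set C \<and> y \<in> set C)"
    using notcyc assms(2) by blast
  moreover have "y \<in> V1 adj S" using cycV1 assms(3,4,5) .
  ultimately show "goes_to V adj S x y"
    using a assms(1) unfolding goes_to_def free_edge_def by blast
qed

lemma target:
  assumes "x \<in> X'"
  shows "\<exists>C\<in>S. cycle_comp adj C \<and> (\<exists>c\<in>set C. adj x c)"
  using assms unfolding X'def goes_to_def free_edge_def by blast

lemma nonX:
  assumes "x \<in> set X" "x \<notin> X'"
  shows "\<exists>Q u. Q \<in> S \<and> path_comp adj Q \<and> (u = hd Q \<or> u = last Q) \<and> adj x u"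
proof -
  have xV2: "x \<in> V2 V adj S" using assms(1) XV2 by blast
  then obtain u where u: "u \<in> V1 adj S" "free_edge adj S x u" unfolding V2_def by blast
  then obtain p where p: "p \<in> S" "(path_comp adj p \<and> (u = hd p \<or> u = last p)) \<or> (cycle_comp adj p \<and> u \<in> set p)"
    unfolding V1_def by blast
  show ?thesis
  proof (cases "cycle_comp adj p \<and> u \<in> set p")
    case True
    then have "goes_to V adj S x u" using xV2 u unfolding goes_to_def by blast
    then have "x \<in> X'" using True p(1) assms(1) unfolding X'def by blast
    then show ?thesis using assms(2) by blast
  next
    case False
    then show ?thesis using p u unfolding free_edge_def by blast
  qed
qed

lemma posint:
  assumes "i < length P" "P!i \<in> V2 V adj S"
  shows "0 < i" "Suc i < length P"
proof -
  have "P \<noteq> []" using nP by auto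
  then have "hd P = P!0" "last P = P!(length P - 1)" by (simp_all add: hd_conv_nth last_conv_nth)
  then have "P!i \<noteq> P!0" "P!i \<noteq> P!(length P - 1)" using intr assms(2) by metis+
  then show "0 < i" "Suc i < length P" using assms(1) by (metis gr0I, metis Suc_lessI diff_Suc_1)
qed

lemma pairC:
  assumes "Suc i < length P" "C \<in> S" "cycle_comp adj C" "c \<in> set C" "adj (P!i) c"
    "D \<in> S" "cycle_comp adj D" "d \<in> set D" "adj (P!Suc i) d"
  shows "C = D"
proof (rule ccontr)
  assume "C \<noteq> D"
  show False
    using R1[OF G can PS Pp split2[OF assms(1)] assms(2-9) \<open>C \<noteq> D\<close>] .
qed

lemma rightnb:
  assumes i: "Suc i < length P" and a: "P!i \<in> X'" "P!Suc i \<in> set X" "P!Suc i \<notin> X'"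
  shows "adj (P!Suc i) (last P)"
proof -
  obtain C c where C: "C \<in> S" "cycle_comp adj C" "c \<in> set C" "adj (P!i) c" using target[OF a(1)] by blast
  obtain Q u where Q: "Q \<in> S" "path_comp adj Q" "u = hd Q \<or> u = last Q" "adj (P!Suc i) u"
    using nonX[OF a(2,3)] by blast
  have sp: "P = take i P @ P!i # P!Suc i # drop (Suc (Suc i)) P" using split2[OF i] .
  have "Q = P"
  proof (rule ccontr)
    assume "Q \<noteq> P"
    show False using R3[OF G can PS Pp sp C(1-3) Q(1,2) \<open>Q \<noteq> P\<close> Q(3)] C(4) Q(4) by blast
  qed
  have "P!i \<in> V2 V adj S" using a(1) X'X XV2 by blast
  then have "0 < i" using posint i by simp
  show ?thesis
  proof (cases "u = hd P")
    case True
    have "take i P \<noteq> []" "hd (take i P) = hd P" using \<open>0 < i\<close> i by auto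
    then show ?thesis using R4[OF G can PS Pp sp C(1-3)] C(4) Q(4) True by metis
  next
    case False
    then show ?thesis using Q \<open>Q = P\<close> by blast
  qed
qed

lemma leftnb:
  assumes i: "Suc i < length P" and a: "P!Suc i \<in> X'" "P!i \<in> set X" "P!i \<notin> X'"
  shows "adj (P!i) (hd P)"
proof -
  obtain C c where C: "C \<in> S" "cycle_comp adj C" "c \<in> set C" "adj (P!Suc i) c" using target[OF a(1)] by blast
  obtain Q u where Q: "Q \<in> S" "path_comp adj Q" "u = hd Q \<or> u = last Q" "adj (P!i) u"
    using nonX[OF a(2,3)] by blast
  have sp: "P = take i P @ P!i # P!Suc i # drop (Suc (Suc i)) P" using split2[OF i] .
  have "Q = P"
  proof (rule ccontr)
    assume "Q \<noteq> P"
    show False using R3[OF G can PS Pp sp C(1-3) Q(1,2) \<open>Q \<noteq> P\<close> Q(3)] C(4) Q(4) by blast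
  qed
  have "P!Suc i \<in> V2 V adj S" using a(1) X'X XV2 by blast
  then have ss: "Suc (Suc i) < length P" using posint i by simp
  show ?thesis
  proof (cases "u = last P")
    case True
    have "drop (Suc (Suc i)) P \<noteq> []" "last (drop (Suc (Suc i)) P) = last P" using ss by auto
    then show ?thesis using R4[OF G can PS Pp sp C(1-3)] C(4) Q(4) True by metis
  next
    case False
    then show ?thesis using Q \<open>Q = P\<close> by blast
  qed
qed

lemma interval:
  assumes "i < length P" "P!i \<in> X'" "j < length P" "P!j \<in> X'" "i < l" "l < j"
  shows "P!l \<in> X'"
proof (rule ccontr)
  assume nl: "P!l \<notin> X'"
  obtain pre suf where ps: "P = pre @ X @ suf" using ex by blast
  define L where "L = {t. t < length P \<and> P!t \<in> X' \<and> t < l}"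
  define U where "U = {t. t < length P \<and> P!t \<in> X' \<and> l < t}"
  define i' where "i' = Max L"
  define j' where "j' = Min U"
  have fL: "finite L" "L \<noteq> {}" using assms unfolding L_def by auto
  have fU: "finite U" "U \<noteq> {}" using assms unfolding U_def by auto
  have i'L: "i' \<in> L" using Max_in[OF fL] unfolding i'_def .
  have j'U: "j' \<in> U" using Min_in[OF fU] unfolding j'_def .
  have i'max: "t \<le> i'" if "t \<in> L" for t using Max_ge[OF fL(1) that] unfolding i'_def .
  have j'min: "j' \<le> t" if "t \<in> U" for t using Min_le[OF fU(1) that] unfolding j'_def .
  have i1: "i' < length P" "P!i' \<in> X'" "i' < l" using i'L unfolding L_def by auto
  have j1: "j' < length P" "P!j' \<in> X'" "l < j'" using j'U unfolding U_def by auto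
  have qn: "P!(Suc i') \<notin> X'"
  proof
    assume q: "P!(Suc i') \<in> X'"
    show False
    proof (cases "Suc i' = l")
      case True then show False using q nl by simp
    next
      case False
      then have "Suc i' \<in> L" using q i1 j1 unfolding L_def by auto
      then show False using i'max by fastforce
    qed
  qed
  have rn: "P!(j' - 1) \<notin> X'"
  proof
    assume q: "P!(j' - 1) \<in> X'"
    show False
    proof (cases "j' - 1 = l")
      case True then show False using q nl by simp
    next
      case False
      then have "j' - 1 \<in> U" using q i1 j1 unfolding U_def by auto
      then have "j' \<le> j' - 1" using j'min by blast
      then show False using j1 by linarith
    qed
  qed
  have pi: "length pre \<le> i'" using pos_in_X[OF ps dP i1(1)] i1(2) X'X by blast
  have pj: "j' < length pre + length X" using pos_in_X[OF ps dP j1(1)] j1(2) X'X by blast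
  have qX: "P!(Suc i') \<in> set X" using pos_in_X[OF ps dP, of "Suc i'"] pi pj i1 j1 by simp
  have "length pre \<le> j' - 1 \<and> j' - 1 < length pre + length X" "j' - 1 < length P"
    using pi pj i1 j1 by linarith+
  then have rX: "P!(j' - 1) \<in> set X" using pos_in_X[OF ps dP, of "j' - 1"] by blast
  have e1: "adj (P!Suc i') (last P)" using rightnb[of i'] i1 j1 qX qn by simp
  have jj: "Suc (j' - 1) = j'" using j1 by simp
  have e2: "adj (P!(j' - 1)) (hd P)" using leftnb[of "j' - 1"] jj i1 j1 rX rn by simp
  have "P!i' \<in> V2 V adj S" "P!j' \<in> V2 V adj S" using i1(2) j1(2) X'X XV2 by blast+
  then have pos: "0 < i'" "Suc j' < length P" using posint i1(1) j1(1) by blast+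
  have lt: "Suc i' < j'" using i1 j1 by simp
  note sp = split3[OF _ j1(1), of i']
  note Bp = split3_B[OF lt j1(1)]
  obtain C c where C: "C \<in> S" "cycle_comp adj C" "c \<in> set C" "adj (P!i') c" using target[OF i1(2)] by blast
  obtain D d where D: "D \<in> S" "cycle_comp adj D" "d \<in> set D" "adj (P!j') d" using target[OF j1(2)] by blast
  have A: "take i' P \<noteq> []" "hd (take i' P) = hd P" using pos i1 by auto
  have E: "drop (Suc j') P \<noteq> []" "last (drop (Suc j') P) = last P" using pos by auto
  show False
    using R5[OF G can PS Pp sp A(1) Bp(1) E(1) C D] lt Bp(2,3) A E e1 e2 by simp
qed

lemma contig:
  "\<exists>i0 Y. i0 + length Y \<le> length P \<and> (\<forall>t<length Y. Y!t = P!(i0+t))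
     \<and> P = take i0 P @ Y @ drop (i0 + length Y) P \<and> set Y = X' \<and> distinct Y"
proof -
  define I where "I = {t. t < length P \<and> P!t \<in> X'}"
  have fI: "finite I" unfolding I_def by auto
  have "X' \<noteq> {}" using cX' by auto
  then obtain x where "x \<in> X'" by blast
  then have "x \<in> set P" using X'X XP by blast
  then obtain k where "k < length P" "P!k = x" by (metis in_set_conv_nth)
  then have neI: "I \<noteq> {}" unfolding I_def using \<open>x \<in> X'\<close> by blast
  define i0 where "i0 = Min I"
  define j0 where "j0 = Max I"
  have i0I: "i0 \<in> I" using Min_in[OF fI neI] unfolding i0_def .
  have j0I: "j0 \<in> I" using Max_in[OF fI neI] unfolding j0_def .
  have i0m: "i0 \<le> t" if "t \<in> I" for t using Min_le[OF fI that] unfolding i0_def .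
  have j0m: "t \<le> j0" if "t \<in> I" for t using Max_ge[OF fI that] unfolding j0_def .
  have ij: "i0 \<le> j0" using i0m j0I by blast
  have j0l: "j0 < length P" using j0I unfolding I_def by blast
  define Y where "Y = take (Suc j0 - i0) (drop i0 P)"
  have lY: "length Y = Suc j0 - i0" unfolding Y_def using j0l ij by simp
  have nY: "\<forall>t<length Y. Y!t = P!(i0+t)" unfolding Y_def using lY j0l ij by (auto simp: nth_drop)
  have dY: "distinct Y" unfolding Y_def using dP by simp
  have eq: "P = take i0 P @ Y @ drop (i0 + length Y) P"
  proof -
    have "drop i0 P = Y @ drop (Suc j0 - i0) (drop i0 P)" unfolding Y_def by (rule append_take_drop_id[symmetric])
    moreover have "drop (Suc j0 - i0) (drop i0 P) = drop (i0 + length Y) P" using lY ij by simp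
    ultimately show ?thesis by (metis append_take_drop_id)
  qed
  have sY: "set Y = X'"
  proof
    show "set Y \<subseteq> X'"
    proof
      fix y assume "y \<in> set Y"
      then obtain t where t: "t < length Y" "Y!t = y" by (metis in_set_conv_nth)
      then have y: "y = P!(i0+t)" using nY by simp
      have i0X: "P!i0 \<in> X'" "i0 < length P" using i0I unfolding I_def by auto
      have j0X: "P!j0 \<in> X'" using j0I unfolding I_def by auto
      show "y \<in> X'"
      proof (cases "t = 0")
        case True then show ?thesis using y i0X by simp
      next
        case False
        show ?thesis
        proof (cases "i0 + t = j0")
          case True then show ?thesis using y j0X by simp
        next
          case False
          then have "i0 + t < j0" using t lY by linarith
          then show ?thesis using interval[of i0 j0 "i0 + t"] i0X j0X j0l \<open>t \<noteq> 0\<close> y by simp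
        qed
      qed
    qed
    show "X' \<subseteq> set Y"
    proof
      fix y assume y: "y \<in> X'"
      then have "y \<in> set P" using X'X XP by blast
      then obtain k where k: "k < length P" "P!k = y" by (metis in_set_conv_nth)
      then have "k \<in> I" using y unfolding I_def by blast
      then have "i0 \<le> k" "k \<le> j0" using i0m j0m by blast+
      then have "k - i0 < length Y" "Y!(k - i0) = y" using lY nY k by auto
      then show "y \<in> set Y" by (metis nth_mem)
    qed
  qed
  have "i0 + length Y \<le> length P" using lY j0l ij by simp
  then show ?thesis using nY eq sY dY by blast
qed

lemma gt_adj: "goes_to V adj S x y \<Longrightarrow> adj x y"
  unfolding goes_to_def free_edge_def by blast

lemma final:
  "(\<exists>pre Y suf. P = pre @ Y @ suf \<and> set Y = X')
    \<and> (\<exists>C\<in>S. cycle_comp adj C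
         \<and> (\<forall>x\<in>X'. \<forall>D\<in>S. \<forall>y\<in>set D. cycle_comp adj D \<and> goes_to V adj S x y \<longrightarrow> y \<in> set C)
         \<and> (card (set C) \<le> 6 \<longrightarrow>
              2 * card {(x, y). x \<in> X' \<and> y \<in> set C \<and> goes_to V adj S x y}
                \<le> card X' * card (set C)))"
proof -
  obtain i0 Y where Y: "i0 + length Y \<le> length P" "\<forall>t<length Y. Y!t = P!(i0+t)"
     "P = take i0 P @ Y @ drop (i0 + length Y) P" "set Y = X'" "distinct Y"
    using contig by blast
  have lY: "length Y = card X'" using Y(4,5) distinct_card by metis
  then have lY2: "2 \<le> length Y" using cX' by simp
  have YX: "Y!t \<in> X'" if "t < length Y" for t using Y(4) that by (metis nth_mem)
  have nb: "Suc (i0 + t) < length P \<and> Y!t = P!(i0+t) \<and> Y!Suc t = P!Suc (i0+t)" if "Suc t < length Y" for t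
    using Y(1,2) that by auto
  obtain C0 c0 where C0: "C0 \<in> S" "cycle_comp adj C0" "c0 \<in> set C0" "adj (Y!0) c0"
  proof -
    have "0 < length Y" using lY2 by linarith
    from target[OF YX[OF this]] show ?thesis using that by blast
  qed
  have allC: "\<forall>D\<in>S. cycle_comp adj D \<longrightarrow> (\<exists>d\<in>set D. adj (Y!t) d) \<longrightarrow> D = C0" if "t < length Y" for t
    using that
  proof (induction t)
    case 0
    show ?case
    proof (intro ballI impI)
      fix D assume D: "D \<in> S" "cycle_comp adj D" "\<exists>d\<in>set D. adj (Y!0) d"
      obtain E e where E: "E \<in> S" "cycle_comp adj E" "e \<in> set E" "adj (Y!1) e"
        using target[OF YX[of 1]] lY2 by auto
      have n0: "Suc (i0 + 0) < length P" "Y!0 = P!(i0+0)" "Y!Suc 0 = P!Suc (i0+0)" using nb[of 0] lY2 by auto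
      obtain d where d: "d \<in> set D" "adj (Y!0) d" using D(3) by blast
      have "C0 = E" using pairC[OF n0(1) C0(1-3) _ E(1-3)] C0(4) E(4) n0 by simp
      moreover have "D = E" using pairC[OF n0(1) D(1,2) d(1) _ E(1-3)] d(2) E(4) n0 by simp
      ultimately show "D = C0" by simp
    qed
  next
    case (Suc t)
    show ?case
    proof (intro ballI impI)
      fix D assume D: "D \<in> S" "cycle_comp adj D" "\<exists>d\<in>set D. adj (Y!Suc t) d"
      obtain E e where E: "E \<in> S" "cycle_comp adj E" "e \<in> set E" "adj (Y!t) e"
        using target[OF YX[of t]] Suc.prems by auto
      have "E = C0" using Suc.IH Suc.prems E by auto
      have n0: "Suc (i0 + t) < length P" "Y!t = P!(i0+t)" "Y!Suc t = P!Suc (i0+t)" using nb[of t] Suc.prems by auto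
      obtain d where d: "d \<in> set D" "adj (Y!Suc t) d" using D(3) by blast
      have "E = D" using pairC[OF n0(1) E(1-3) _ D(1,2) d(1)] d(2) E(4) n0 by simp
      then show "D = C0" using \<open>E = C0\<close> by simp
    qed
  qed
  have c1: "\<exists>pre Y suf. P = pre @ Y @ suf \<and> set Y = X'" using Y(3,4) by blast
  have c2: "\<forall>x\<in>X'. \<forall>D\<in>S. \<forall>y\<in>set D. cycle_comp adj D \<and> goes_to V adj S x y \<longrightarrow> y \<in> set C0"
  proof (intro ballI impI)
    fix x D y assume a: "x \<in> X'" "D \<in> S" "y \<in> set D" "cycle_comp adj D \<and> goes_to V adj S x y"
    obtain t where t: "t < length Y" "Y!t = x" using a(1) Y(4) by (metis in_set_conv_nth)
    have "D = C0" using allC[OF t(1)] a t gt_adj by blast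
    then show "y \<in> set C0" using a by simp
  qed
  have c3: "2 * card {(x, y). x \<in> X' \<and> y \<in> set C0 \<and> goes_to V adj S x y} \<le> card X' * card (set C0)"
    if six: "card (set C0) \<le> 6"
  proof -
    define cy where "cy = cyc adj C0"
    define M where "M = set C0"
    define f where "f = succC adj C0"
    define m where "m = length cy"
    have cp: "distinct cy" "set cy = M" "3 \<le> m" using cyc_props[OF C0(2)] unfolding cy_def M_def m_def by blast+
    have cM: "card M = m" using cp distinct_card unfolding m_def by metis
    have fin: "finite M" unfolding M_def by simp
    have fn: "f (cy!i) = cy!(Suc i mod m)" if "i < m" for i
      using succ_nth[OF C0(2)] that unfolding f_def cy_def m_def by simp
    have m0: "0 < m" using cp by simp
    have ff: "f (f (cy!i)) = cy!((i + 2) mod m)" if "i < m" for i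
    proof -
      have "Suc i mod m < m" using m0 by simp
      then have "f (f (cy!i)) = cy!(Suc (Suc i mod m) mod m)" using fn that by simp
      also have "Suc (Suc i mod m) mod m = (i + 2) mod m" by (simp add: mod_Suc_eq)
      finally show ?thesis .
    qed
    have ffff: "f (f (f (f (cy!i)))) = cy!((i + 4) mod m)" if "i < m" for i
    proof -
      have "(i + 2) mod m < m" using m0 by simp
      then have "f (f (f (f (cy!i)))) = cy!(((i + 2) mod m + 2) mod m)" using ff that by simp
      also have "((i + 2) mod m + 2) mod m = (i + 2 + 2) mod m" by (rule mod_add_left_eq)
      also have "(i + 2 + 2) = i + (4::nat)" by simp
      finally show ?thesis .
    qed
    have eqi: "cy!a = cy!b \<longleftrightarrow> a = b" if "a < m" "b < m" for a b
      using cp(1) that nth_eq_iff_index_eq unfolding m_def by blast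
    have fM: "f ` M \<subseteq> M"
    proof
      fix z assume "z \<in> f ` M"
      then obtain u where "u \<in> M" "z = f u" by blast
      then obtain i where "i < m" "cy!i = u" using cp(2) unfolding m_def by (metis in_set_conv_nth)
      then show "z \<in> M" using fn \<open>z = f u\<close> cp(2) m0 unfolding m_def by (metis mod_less_divisor nth_mem)
    qed
    have inj: "inj_on f M"
    proof
      fix u v assume uv: "u \<in> M" "v \<in> M" "f u = f v"
      obtain i where i: "i < m" "cy!i = u" using uv(1) cp(2) unfolding m_def by (metis in_set_conv_nth)
      obtain j where j: "j < m" "cy!j = v" using uv(2) cp(2) unfolding m_def by (metis in_set_conv_nth)
      have "cy!(Suc i mod m) = cy!(Suc j mod m)" using fn i j uv(3) by metis
      then have "Suc i mod m = Suc j mod m" using eqi m0 by simp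
      then have "i = j" using mod_inj i j by blast
      then show "u = v" using i j by simp
    qed
    have f2: "\<forall>u\<in>M. f (f u) \<noteq> u"
    proof
      fix u assume "u \<in> M"
      then obtain i where i: "i < m" "cy!i = u" using cp(2) unfolding m_def by (metis in_set_conv_nth)
      have "(i + 2) mod m \<noteq> i" using mod_ne[of i m 2] i cp by simp
      moreover have "(i + 2) mod m < m" using m0 by simp
      ultimately have "cy!((i + 2) mod m) \<noteq> cy!i" using eqi i(1) by blast
      then show "f (f u) \<noteq> u" using ff[OF i(1)] i by simp
    qed
    have f4: "5 \<le> card M \<longrightarrow> (\<forall>u\<in>M. f (f (f (f u))) \<noteq> u)"
    proof (intro impI ballI)
      fix u assume m5: "5 \<le> card M" and "u \<in> M"
      then obtain i where i: "i < m" "cy!i = u" using cp(2) unfolding m_def by (metis in_set_conv_nth)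
      have "(i + 4) mod m \<noteq> i" using mod_ne[of i m 4] i m5 cM by simp
      moreover have "(i + 4) mod m < m" using m0 by simp
      ultimately have "cy!((i + 4) mod m) \<noteq> cy!i" using eqi i(1) by blast
      then show "f (f (f (f u))) \<noteq> u" using ffff[OF i(1)] i by simp
    qed
    have m6: "card M \<le> 6" using six unfolding M_def .
    have m3: "3 \<le> card M" using cM cp by simp
    define K where "K = (\<lambda>x. {y \<in> M. goes_to V adj S x y})"
    have rel: "relK M f (K (Y!t)) (K (Y!Suc t))" if "Suc t < length Y" for t
    proof -
      have n0: "Suc (i0 + t) < length P" "Y!t = P!(i0+t)" "Y!Suc t = P!Suc (i0+t)" using nb[of t] that by auto
      note sp = split2[OF n0(1)]
      have a: "K (Y!Suc t) \<inter> f ` K (Y!t) = {}"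
      proof (rule ccontr)
        assume "K (Y!Suc t) \<inter> f ` K (Y!t) \<noteq> {}"
        then obtain c where c: "c \<in> K (Y!t)" "f c \<in> K (Y!Suc t)" by blast
        then have "adj (P!(i0+t)) c" "adj (P!Suc (i0+t)) (succC adj C0 c)" "c \<in> set C0"
          using n0 gt_adj unfolding K_def f_def M_def by auto
        then show False using R2[OF G can PS Pp sp C0(1,2)] by blast
      qed
      have b: "K (Y!t) \<inter> f ` K (Y!Suc t) = {}"
      proof (rule ccontr)
        assume "K (Y!t) \<inter> f ` K (Y!Suc t) \<noteq> {}"
        then obtain c where c: "c \<in> K (Y!Suc t)" "f c \<in> K (Y!t)" by blast
        then have "adj (P!(i0+t)) (succC adj C0 c)" "adj (P!Suc (i0+t)) c" "c \<in> set C0"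
          using n0 gt_adj unfolding K_def f_def M_def by auto
        then show False using R2[OF G can PS Pp sp C0(1,2)] by blast
      qed
      show ?thesis using a b unfolding relK_def K_def by blast
    qed
    have succ: "successively (\<lambda>u v. relK M f (K u) (K v)) Y"
      unfolding successively_conv_nth using rel by blast
    have ne: "\<forall>y\<in>set Y. K y \<noteq> {}"
    proof
      fix x assume "x \<in> set Y"
      then obtain t where t: "t < length Y" "Y!t = x" by (metis in_set_conv_nth)
      then have "x \<in> X'" using YX by blast
      then obtain D y where D: "D \<in> S" "cycle_comp adj D" "y \<in> set D" "goes_to V adj S x y"
        unfolding X'def by blast
      then have "D = C0" using allC[OF t(1)] t gt_adj by blast
      then show "K x \<noteq> {}" using D unfolding K_def M_def by blast
    qed
    have cb: "2 * sum_list (map (\<lambda>y. card (K y)) Y) \<le> length Y * card M"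
      using chain_bound[OF fin m3 m6 fM inj f2 f4 lY2 succ ne] .
    have "{(x, y). x \<in> X' \<and> y \<in> set C0 \<and> goes_to V adj S x y} = Sigma X' K"
      unfolding K_def M_def by auto
    moreover have "card (Sigma X' K) = (\<Sum>x\<in>X'. card (K x))"
      using fin unfolding K_def by (simp add: Y(4)[symmetric])
    moreover have "(\<Sum>x\<in>X'. card (K x)) = sum_list (map (\<lambda>y. card (K y)) Y)"
      using Y(4,5) by (simp add: sum_list_distinct_conv_sum_set)
    ultimately show ?thesis using cb lY unfolding M_def by simp
  qed
  show ?thesis using c1 c2 c3 C0(1,2) by blast
qed

end


theorem mainTheorem11:
  fixes V :: "'a set" and adj :: "'a \<Rightarrow> 'a \<Rightarrow> bool" and S :: "'a list set"
    and P X :: "'a list"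
  assumes "simple_graph V adj" and "regular 6 V adj"
    and "canonical V adj S"
    and "P \<in> S" and "path_comp adj P"
    and "\<exists>pre suf. P = pre @ X @ suf" and "length X \<ge> 2"
    and "set X \<subseteq> V2b V adj S"
    and "X' = {x \<in> set X. \<exists>C\<in>S. cycle_comp adj C \<and> (\<exists>y\<in>set C. goes_to V adj S x y)}"
    and "card X' \<ge> 2"
  shows "(\<exists>pre Y suf. P = pre @ Y @ suf \<and> set Y = X')
    \<and> (\<exists>C\<in>S. cycle_comp adj C
         \<and> (\<forall>x\<in>X'. \<forall>D\<in>S. \<forall>y\<in>set D. cycle_comp adj D \<and> goes_to V adj S x y \<longrightarrow> y \<in> set C)
         \<and> (card (set C) \<le> 6 \<longrightarrow>
              2 * card {(x, y). x \<in> X' \<and> y \<in> set C \<and> goes_to V adj S x y}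
                \<le> card X' * card (set C)))"
  using final[OF assms(1) assms(3-10)] .

end
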